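(* Let $(a_1,\dots,a_6)$ be a minimal tetrahedral curve, with ideal $I$, such that $$a_1>\max\{a_3+a_5+2,\ a_2+a_4+2\}\quad\text{and}\quad a_6>\max\{a_4+a_5+2,\ a_2+a_3+2\}.$$ Then there is no non-minimal tetrahedral curve that reduces to $I$ by a finite sequence of reductions of types (A), (B), (C), (D).
   Context: Let $k$ be a field, $R=k[a,b,c,d]$. The tetrahedral curve $(a_1,\dots,a_6)$ has ideal $(a,b)^{a_1}\cap(a,c)^{a_2}\cap(a,d)^{a_3}\cap(b,c)^{a_4}\cap(b,d)^{a_5}\cap(c,d)^{a_6}$. With $a_i'=\max\{0,a_i-1\}$, the reductions are: (A) if $a_1+a_2\ge a_4$, $a_1+a_3\ge a_5$, $a_2+a_3\ge a_6$, the curve reduces to $(a_1',a_2',a_3',a_4,a_5,a_6)$ (and its ideal is $a\cdot I'+(b^{a_1}c^{a_2}d^{a_3})$, $I'$ the new ideal); (B) if $a_1+a_4\ge a_2$, $a_1+a_5\ge a_3$, $a_4+a_5\ge a_6$, to $(a_1',a_2,a_3,a_4',a_5',a_6)$; (C) if $a_2+a_4\ge a_1$, $a_2+a_6\ge a_3$, $a_4+a_6\ge a_5$, to $(a_1,a_2',a_3,a_4',a_5,a_6')$; (D) if $a_3+a_5\ge a_1$, $a_3+a_6\ge a_2$, $a_5+a_6\ge a_4$, to $(a_1,a_2,a_3',a_4,a_5',a_6')$. A non-arithmetically Cohen–Macaulay tetrahedral curve is minimal if none of (A)–(D) applies. These reductions are basic double links and preserve the even liaison class. *)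

theory Defs
  imports Main
begin

text \<open>A tetrahedral curve (a1,...,a6) with ideal
  (a,b)^a1 \<inter> (a,c)^a2 \<inter> (a,d)^a3 \<inter> (b,c)^a4 \<inter> (b,d)^a5 \<inter> (c,d)^a6 in k[a,b,c,d].
  The ideal is determined by the tuple and conversely (primary decomposition),
  so curves are represented by their 6-tuples of exponents.\<close>

datatype tcurve = TC nat nat nat nat nat nat

text \<open>a' = max 0 (a - 1); on nat this is truncated subtraction a - 1.\<close>
definition dec :: "nat \<Rightarrow> nat" where "dec x = x - 1"

definition condA :: "tcurve \<Rightarrow> bool" where
  "condA C = (case C of TC a1 a2 a3 a4 a5 a6 \<Rightarrow>
     a1 + a2 \<ge> a4 \<and> a1 + a3 \<ge> a5 \<and> a2 + a3 \<ge> a6)"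
definition condB :: "tcurve \<Rightarrow> bool" where
  "condB C = (case C of TC a1 a2 a3 a4 a5 a6 \<Rightarrow>
     a1 + a4 \<ge> a2 \<and> a1 + a5 \<ge> a3 \<and> a4 + a5 \<ge> a6)"
definition condC :: "tcurve \<Rightarrow> bool" where
  "condC C = (case C of TC a1 a2 a3 a4 a5 a6 \<Rightarrow>
     a2 + a4 \<ge> a1 \<and> a2 + a6 \<ge> a3 \<and> a4 + a6 \<ge> a5)"
definition condD :: "tcurve \<Rightarrow> bool" where
  "condD C = (case C of TC a1 a2 a3 a4 a5 a6 \<Rightarrow>
     a3 + a5 \<ge> a1 \<and> a3 + a6 \<ge> a2 \<and> a5 + a6 \<ge> a4)"

definition redA :: "tcurve \<Rightarrow> tcurve" where
  "redA C = (case C of TC a1 a2 a3 a4 a5 a6 \<Rightarrow> TC (dec a1) (dec a2) (dec a3) a4 a5 a6)"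
definition redB :: "tcurve \<Rightarrow> tcurve" where
  "redB C = (case C of TC a1 a2 a3 a4 a5 a6 \<Rightarrow> TC (dec a1) a2 a3 (dec a4) (dec a5) a6)"
definition redC :: "tcurve \<Rightarrow> tcurve" where
  "redC C = (case C of TC a1 a2 a3 a4 a5 a6 \<Rightarrow> TC a1 (dec a2) a3 (dec a4) a5 (dec a6))"
definition redD :: "tcurve \<Rightarrow> tcurve" where
  "redD C = (case C of TC a1 a2 a3 a4 a5 a6 \<Rightarrow> TC a1 a2 (dec a3) a4 (dec a5) (dec a6))"

definition reduces_step :: "tcurve \<Rightarrow> tcurve \<Rightarrow> bool" where
  "reduces_step C D =
     ((condA C \<and> D = redA C) \<or> (condB C \<and> D = redB C) \<or>
      (condC C \<and> D = redC C) \<or> (condD C \<and> D = redD C))"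

definition reducible :: "tcurve \<Rightarrow> bool" where
  "reducible C = (condA C \<or> condB C \<or> condC C \<or> condD C)"

definition minimal_tc :: "tcurve \<Rightarrow> bool" where
  "minimal_tc C = (\<not> reducible C)"

end

theory Submission
  imports Defs
begin

lemma no_pred:
  fixes a1 a2 a3 a4 a5 a6 :: nat
  assumes "a1 > max (a3 + a5 + 2) (a2 + a4 + 2)"
    and "a6 > max (a4 + a5 + 2) (a2 + a3 + 2)"
  shows "\<not> reduces_step D (TC a1 a2 a3 a4 a5 a6)"
proof (cases D)
  case (TC b1 b2 b3 b4 b5 b6)
  show ?thesis using assms unfolding TC reduces_step_def condA_def condB_def condC_def condD_def
      redA_def redB_def redC_def redD_def dec_def
    by auto
qed

theorem proposition6p2:
  fixes a1 a2 a3 a4 a5 a6 :: nat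
  assumes "minimal_tc (TC a1 a2 a3 a4 a5 a6)"
    and "a1 > max (a3 + a5 + 2) (a2 + a4 + 2)"
    and "a6 > max (a4 + a5 + 2) (a2 + a3 + 2)"
  shows "\<not> (\<exists>C. \<not> minimal_tc C \<and> reduces_step\<^sup>*\<^sup>* C (TC a1 a2 a3 a4 a5 a6))"
proof
  assume "\<exists>C. \<not> minimal_tc C \<and> reduces_step\<^sup>*\<^sup>* C (TC a1 a2 a3 a4 a5 a6)"
  then obtain C where c1: "\<not> minimal_tc C" and c2: "reduces_step\<^sup>*\<^sup>* C (TC a1 a2 a3 a4 a5 a6)" by blast
  from c2 show False
  proof (cases rule: rtranclp.cases)
    case rtrancl_refl
    then show False using c1 assms(1) by simp
  next
    case (rtrancl_into_rtrancl D)
    then show False using no_pred[OF assms(2,3)] by blast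
  qed
qed

end
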